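(* Let $\gamma\in[0,1)$ and $\Omega_{\gamma}=\{z\in\mathbb{C}:|z+\frac{\gamma}{1-\gamma}|<\frac{1}{1-\gamma}\}$. Let $f$ be analytic in $\Omega_\gamma$ with $|f(z)|\le1$ on $\Omega_\gamma$ and $f(z)=\sum_{n=0}^\infty a_n\left(z+\frac{\gamma}{1-\gamma}\right)^n$ in $\Omega_\gamma$. Then $$\sum_{n=0}^\infty \frac{|a_n|}{(1-\gamma)^n}\rho^n+\left(\frac{1}{1+|a_0|}+\frac{\rho}{1-\rho}\right)\sum_{n=1}^\infty\frac{|a_n|^2}{(1-\gamma)^{2n}}\rho^{2n}\le 1$$ for $|(1-\gamma)z+\gamma|=\rho\le\rho_0=1/3$. The number $\rho_0=1/3$ is best possible, i.e. for every $\rho\in(1/3,1)$ there is such a function $f$ for which the left-hand side exceeds $1$.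
   Context: $\Omega_\gamma$ is the open disk centered at $-\gamma/(1-\gamma)$ of radius $1/(1-\gamma)$. *)

theory Defs
  imports "HOL-Complex_Analysis.Complex_Analysis"
begin

definition Omega :: "real \<Rightarrow> complex set" where
  "Omega \<gamma> = ball (complex_of_real (- \<gamma> / (1 - \<gamma>))) (1 / (1 - \<gamma>))"

definition S1 :: "real \<Rightarrow> (nat \<Rightarrow> complex) \<Rightarrow> real \<Rightarrow> nat \<Rightarrow> real" where
  "S1 \<gamma> a \<rho> n = norm (a n) / (1 - \<gamma>) ^ n * \<rho> ^ n"

definition S2 :: "real \<Rightarrow> (nat \<Rightarrow> complex) \<Rightarrow> real \<Rightarrow> nat \<Rightarrow> real" where
  "S2 \<gamma> a \<rho> n = (norm (a (n + 1)))\<^sup>2 / (1 - \<gamma>) ^ (2 * (n + 1)) * \<rho> ^ (2 * (n + 1))"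

definition bohr_lhs :: "real \<Rightarrow> (nat \<Rightarrow> complex) \<Rightarrow> real \<Rightarrow> real" where
  "bohr_lhs \<gamma> a \<rho> = (\<Sum>n. S1 \<gamma> a \<rho> n)
      + (1 / (1 + norm (a 0)) + \<rho> / (1 - \<rho>)) * (\<Sum>n. S2 \<gamma> a \<rho> n)"

definition admissible :: "real \<Rightarrow> (complex \<Rightarrow> complex) \<Rightarrow> (nat \<Rightarrow> complex) \<Rightarrow> bool" where
  "admissible \<gamma> f a \<longleftrightarrow> f holomorphic_on Omega \<gamma>
     \<and> (\<forall>z\<in>Omega \<gamma>. norm (f z) \<le> 1)
     \<and> (\<forall>z\<in>Omega \<gamma>. (\<lambda>n. a n * (z + complex_of_real (\<gamma> / (1 - \<gamma>))) ^ n) sums f z)"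

end

theory Submission
  imports Defs
begin

lemma schwarz_pick0:
  assumes hol: "h holomorphic_on ball 0 1" and lt: "\<And>z. norm z < 1 \<Longrightarrow> norm (h z) < 1"
  shows "norm (deriv h 0) \<le> 1 - norm (h 0)^2"
proof -
  define c where "c = h 0"
  have c1: "norm c < 1" using lt[of 0] by (simp add: c_def)
  define \<phi> where "\<phi> = Moebius_function 0 c \<circ> h"
  have hol\<phi>: "\<phi> holomorphic_on ball 0 1"
    unfolding \<phi>_def
    by (rule holomorphic_on_compose_gen[OF hol Moebius_function_holomorphic[OF c1]]) (use lt in auto)
  have \<phi>0: "\<phi> 0 = 0" by (simp add: \<phi>_def c_def Moebius_function_eq_zero)
  have \<phi>lt: "norm (\<phi> z) < 1" if "norm z < 1" for z
    unfolding \<phi>_def o_def using Moebius_function_norm_lt_1[OF c1 lt[OF that]] .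
  have S: "norm (deriv \<phi> 0) \<le> 1"
    using Schwarz_Lemma(2)[OF hol\<phi> \<phi>0 \<phi>lt, of 0] by auto
  have nz: "1 - cnj c * c \<noteq> 0"
  proof
    assume "1 - cnj c * c = 0"
    hence "norm (cnj c * c) = 1" by (metis norm_one right_minus_eq)
    thus False using c1 mult_strict_mono[of "norm c" 1 "norm c" 1] by (simp add: norm_mult)
  qed
  have dh: "(h has_field_derivative deriv h 0) (at 0)"
    using hol by (intro holomorphic_derivI[OF hol]) auto
  have dM: "(Moebius_function 0 c has_field_derivative 1 / (1 - cnj c * c)) (at c)"
  proof -
    have "((\<lambda>z. (z - c) / (1 - cnj c * z)) has_field_derivative
          ((1 - cnj c * c) + cnj c * (c - c)) / (1 - cnj c * c)^2) (at c)"
      using nz by (auto intro!: derivative_eq_intros simp: power2_eq_square)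
    thus ?thesis using nz by (simp add: Moebius_function_simple[abs_def] power2_eq_square)
  qed
  have "(\<phi> has_field_derivative deriv h 0 * (1 / (1 - cnj c * c))) (at 0)"
    unfolding \<phi>_def using DERIV_chain[OF dM[unfolded c_def] dh] by (simp add: c_def)
  hence "deriv \<phi> 0 = deriv h 0 / (1 - cnj c * c)" by (simp add: DERIV_imp_deriv)
  moreover have "cnj c * c = of_real (norm c ^ 2)"
    by (metis complex_norm_square mult.commute)
  ultimately have D: "deriv \<phi> 0 = deriv h 0 / of_real (1 - norm c ^ 2)" by (simp only: of_real_diff of_real_1)
  have pos: "1 - norm c ^ 2 > 0" using c1 by (simp add: power_less_one_iff abs_square_less_1)
  have "norm (deriv \<phi> 0) = norm (deriv h 0) / abs (1 - norm c ^ 2)"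
    by (simp only: D norm_divide norm_of_real)
  hence "norm (deriv h 0) / (1 - norm c ^ 2) \<le> 1" using S pos by simp
  thus ?thesis using pos by (simp add: divide_le_eq c_def)
qed

lemma wiener:
  fixes b :: "nat \<Rightarrow> complex" and g :: "complex \<Rightarrow> complex"
  assumes S: "\<And>w. norm w < 1 \<Longrightarrow> (\<lambda>n. b n * w^n) sums g w"
      and B: "\<And>w. norm w < 1 \<Longrightarrow> norm (g w) \<le> 1"
      and k: "k \<ge> 1"
  shows "norm (b k) \<le> 1 - norm (b 0)^2"
proof -
  define \<omega> where "\<omega> = exp (2 * of_real pi * \<i> / of_nat k)"
  have \<omega>n: "\<omega> ^ n = exp(2 * of_real pi * \<i> * of_nat n / of_nat k)" for n
    unfolding \<omega>_def by (simp add: exp_of_nat_mult[symmetric] algebra_simps)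
  have \<omega>eq: "\<omega>^n = 1 \<longleftrightarrow> k dvd n" for n
    using complex_root_unity_eq_1[OF k, of n] \<omega>n by simp
  have n\<omega>: "norm \<omega> = 1" unfolding \<omega>_def by (simp add: norm_exp_eq_Re)
  have rsum: "(\<Sum>j<k. (\<omega>^n)^j) = (if k dvd n then of_nat k else 0)" for n
  proof -
    have "(\<omega>^n)^k = 1" by (metis \<omega>eq dvd_refl power_mult power_mult_distrib mult.commute power_one)
    thus ?thesis by (simp add: sum_gp_strict \<omega>eq)
  qed
  define c where "c n = (if k dvd n then b n else 0)" for n
  define G where "G z = (\<Sum>j<k. g (\<omega>^j * z)) / of_nat k" for z
  have Gs: "(\<lambda>n. c n * z^n) sums G z" if z: "norm z < 1" for z
  proof -
    have nz: "norm (\<omega>^j * z) < 1" for j using z by (simp add: norm_mult norm_power n\<omega>)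
    have "(\<lambda>n. \<Sum>j<k. b n * (\<omega>^j*z)^n) sums (\<Sum>j<k. g(\<omega>^j*z))"
      by (rule sums_sum) (use S nz in auto)
    hence "(\<lambda>n. (\<Sum>j<k. b n * (\<omega>^j*z)^n) / of_nat k) sums G z"
      unfolding G_def by (rule sums_divide)
    moreover have "(\<Sum>j<k. b n * (\<omega>^j*z)^n) / of_nat k = c n * z^n" for n
    proof -
      have "(\<Sum>j<k. b n * (\<omega>^j*z)^n) = b n * z^n * (\<Sum>j<k. (\<omega>^n)^j)"
        by (simp add: sum_distrib_left power_mult_distrib algebra_simps flip: power_mult)
      thus ?thesis using k by (simp add: rsum c_def)
    qed
    ultimately show ?thesis by simp
  qed
  have GB: "norm (G z) \<le> 1" if z: "norm z < 1" for z
  proof -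
    have nz: "norm (\<omega>^j * z) < 1" for j using z by (simp add: norm_mult norm_power n\<omega>)
    have "norm (\<Sum>j<k. g (\<omega>^j * z)) \<le> (\<Sum>j<k. norm (g (\<omega>^j * z)))" by (rule norm_sum)
    also have "\<dots> \<le> (\<Sum>j<k. 1)" by (rule sum_mono) (use B nz in auto)
    finally have "norm (\<Sum>j<k. g (\<omega>^j * z)) \<le> of_nat k" by simp
    thus ?thesis using k by (simp add: G_def norm_divide divide_le_eq)
  qed
  have Hs: "\<exists>z. norm z < 1 \<and> (\<lambda>n. b (n*k) * w^n) sums G z" if w: "norm w < 1" for w
  proof -
    obtain z where zk: "z^k = w" and zn: "norm z < 1"
    proof (cases "w = 0")
      case True
      then show ?thesis using that[of 0] k by (simp add: power_0_left)
    next
      case False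
      define z where "z = root k (norm w) * cis (Arg w / k)"
      have "bij_betw (\<lambda>x. z * x) {x. x ^ k = 1} {x. x ^ k = w}"
        unfolding z_def by (rule bij_betw_nth_root_unity) (use False k in auto)
      hence "z * 1 \<in> {x. x ^ k = w}" by (rule bij_betw_apply) simp
      moreover have "norm z < 1" using w k by (simp add: z_def norm_mult)
      ultimately show ?thesis using that by auto
    qed
    have sm: "strict_mono (\<lambda>n::nat. n * k)" using k by (auto intro: strict_monoI)
    have "(\<lambda>n. c (n*k) * z^(n*k)) sums G z \<longleftrightarrow> (\<lambda>n. c n * z^n) sums G z"
      by (rule sums_mono_reindex[OF sm, of "\<lambda>n. c n * z^n"]) (auto simp: c_def elim!: dvdE)
    hence "(\<lambda>n. c (n*k) * z^(n*k)) sums G z" using Gs[OF zn] by simp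
    moreover have "c (n*k) * z^(n*k) = b (n*k) * w^n" for n
      by (simp add: c_def flip: zk power_mult) (simp add: mult.commute)
    ultimately show ?thesis using zn by auto
  qed
  define F where "F = Abs_fps (\<lambda>n. b (n*k))"
  have R: "fps_conv_radius F \<ge> 1"
    unfolding fps_conv_radius_def
  proof (rule conv_radius_geI_ex')
    fix r :: real assume "0 < r" "ereal r < 1"
    then obtain z where "(\<lambda>n. b (n*k) * (of_real r)^n) sums G z" using Hs[of "of_real r"] by auto
    thus "summable (\<lambda>n. fps_nth F n * of_real r ^ n)" by (auto simp: F_def sums_iff)
  qed
  have ball: "ball (0::complex) 1 \<subseteq> eball 0 (fps_conv_radius F)"
  proof (rule subsetI)
    fix x :: complex assume "x \<in> ball 0 1"
    hence "ereal (dist 0 x) < 1" by (simp add: one_ereal_def)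
    hence "ereal (dist 0 x) < fps_conv_radius F" using R by (rule order_less_le_trans)
    thus "x \<in> eball 0 (fps_conv_radius F)" using [[show_types]] by (simp only: in_eball_iff)
  qed
  have evalF: "norm (eval_fps F w) \<le> 1" if w: "norm w < 1" for w
  proof -
    have "ereal (norm w) < 1" using w by (simp add: one_ereal_def)
    hence "norm w < fps_conv_radius F" using R by (rule order_less_le_trans)
    hence s1: "(\<lambda>n. b (n*k) * w^n) sums eval_fps F w" using sums_eval_fps by (fastforce simp: F_def)
    obtain z where "norm z < 1" "(\<lambda>n. b (n*k) * w^n) sums G z" using Hs[OF w] by auto
    thus ?thesis using s1 GB sums_unique2 by metis
  qed
  have F0: "eval_fps F 0 = b 0" by (simp add: eval_fps_at_0 F_def)
  have r0: "norm (0::complex) < fps_conv_radius F" 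
  proof -
    have "(0::ereal) < 1" by simp
    hence "0 < fps_conv_radius F" using R by (rule order_less_le_trans)
    thus ?thesis by (simp add: zero_ereal_def)
  qed
  have dF: "(eval_fps F has_field_derivative b k) (at 0)"
    using has_field_derivative_eval_fps[OF r0, of UNIV] by (simp add: F_def eval_fps_at_0 fps_deriv_nth)
  have T: "t * norm (b k) + t^2 * norm (b 0)^2 \<le> 1" if t: "0 < t" "t < 1" for t :: real
  proof -
    define h where "h w = of_real t * eval_fps F w" for w
    have holh: "h holomorphic_on ball 0 1" unfolding h_def
      by (intro holomorphic_intros holomorphic_on_eval_fps ball)
    have hlt: "norm (h w) < 1" if "norm w < 1" for w
    proof -
      have "norm (h w) = t * norm (eval_fps F w)" using t by (simp add: h_def norm_mult)
      also have "\<dots> \<le> t * 1" using evalF[OF that] t by (intro mult_left_mono) auto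
      finally show ?thesis using t by simp
    qed
    have "(h has_field_derivative of_real t * b k) (at 0)" unfolding h_def
      by (rule DERIV_cmult[OF dF])
    hence "deriv h 0 = of_real t * b k" by (rule DERIV_imp_deriv)
    moreover have "h 0 = of_real t * b 0" by (simp add: h_def F0)
    ultimately have "norm (of_real t * b k) \<le> 1 - norm (of_real t * b 0)^2"
      using schwarz_pick0[OF holh hlt] by simp
    thus ?thesis using t by (simp add: norm_mult power_mult_distrib)
  qed
  have lim: "((\<lambda>t::real. t * norm (b k) + t^2 * norm (b 0)^2) \<longlongrightarrow> 1 * norm (b k) + 1^2 * norm (b 0)^2) (at_left 1)"
    by (intro tendsto_intros)
  have ev: "eventually (\<lambda>t::real. t * norm (b k) + t^2 * norm (b 0)^2 \<le> 1) (at_left 1)"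
    using eventually_at_left_real[of 0 "1::real"] by (rule eventually_mono) (use T in auto)
  have "1 * norm (b k) + 1^2 * norm (b 0)^2 \<le> 1"
    by (rule tendsto_upperbound[OF lim ev]) simp
  thus ?thesis by simp
qed

lemma final_ineq:
  fixes A u v :: real
  assumes A: "0 \<le> A" "A \<le> 1" and u: "0 \<le> u" "u \<le> 1/2" and v: "0 \<le> v" "v \<le> 1/8"
  shows "A + (1 - A^2) * u + (1/(1+A) + u) * ((1 - A^2)^2 * v) \<le> 1"
proof -
  define s where "s = 1 - A^2"
  have s0: "0 \<le> s" using A by (simp add: s_def power_le_one)
  have i1: "s * u \<le> s * (1/2)" using s0 u by (intro mult_left_mono) auto
  have i2: "(1/(1+A) + u) * (s^2 * v) \<le> (1/(1+A) + 1/2) * (s^2 * (1/8))"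
    using u v A s0 by (intro mult_mono) auto
  have e1: "(1/(1+A) + 1/2) * (s^2 * (1/8)) = ((1/(1+A)) * s^2)/8 + s^2/16"
    using A by (simp add: field_simps)
  have e2: "(1/(1+A)) * s^2 = (1-A)^2 * (1+A)"
    using A by (simp add: s_def field_simps power2_eq_square)
  have e3: "1 - (A + s/2 + (1-A)^2*(1+A)/8 + s^2/16) = (1-A)^3 * (3/8 - (1-A)/16)"
    by (simp add: s_def power2_eq_square power3_eq_cube field_simps)
  have i3: "(1-A)^3 * (3/8 - (1-A)/16) \<ge> 0" using A by (intro mult_nonneg_nonneg) auto
  have "A + s * u + (1/(1+A) + u) * (s^2 * v) \<le> A + s * (1/2) + (1/(1+A) + 1/2) * (s^2 * (1/8))"
    using i1 i2 by linarith
  also have "\<dots> = A + s/2 + (1-A)^2*(1+A)/8 + s^2/16" unfolding e1 e2 by simp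
  also have "\<dots> \<le> 1" using e3 i3 by linarith
  finally show ?thesis unfolding s_def .
qed

lemma part1_core:
  fixes b :: "nat \<Rightarrow> complex" and g :: "complex \<Rightarrow> complex" and \<rho> :: real
  assumes S: "\<And>w. norm w < 1 \<Longrightarrow> (\<lambda>n. b n * w^n) sums g w"
      and B: "\<And>w. norm w < 1 \<Longrightarrow> norm (g w) \<le> 1"
      and r: "0 \<le> \<rho>" "\<rho> \<le> 1/3"
  shows "summable (\<lambda>n. norm (b n) * \<rho>^n) \<and> summable (\<lambda>n. norm (b (n+1))^2 * \<rho>^(2*(n+1)))
     \<and> (\<Sum>n. norm (b n) * \<rho>^n) + (1/(1+norm (b 0)) + \<rho>/(1-\<rho>)) * (\<Sum>n. norm (b (n+1))^2 * \<rho>^(2*(n+1))) \<le> 1"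
proof -
  define A where "A = norm (b 0)"
  define s where "s = 1 - A^2"
  have "g 0 = b 0" using S[of 0] powser_sums_zero[of b] sums_unique2 by simp
  hence A1: "A \<le> 1" using B[of 0] by (simp add: A_def)
  have A0: "0 \<le> A" by (simp add: A_def)
  have s0: "0 \<le> s" "s \<le> 1" using A1 A0 by (auto simp: s_def power_le_one)
  have bk: "norm (b (Suc n)) \<le> s" for n
    using wiener[OF S B, of "Suc n"] by (simp add: s_def A_def)
  have b1: "norm (b n) \<le> 1" for n
    using A1 bk s0 by (cases n) (auto simp: A_def intro: order_trans)
  have r1: "\<rho> < 1" using r by simp
  have sum1: "summable (\<lambda>n. norm (b n) * \<rho>^n)"
    by (rule summable_comparison_test[of _ "\<lambda>n. \<rho>^n"])
       (use r r1 b1 in \<open>auto intro!: exI[of _ 0] mult_left_le_one_le simp: abs_mult\<close>)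
  have r2: "\<rho>^2 < 1" using r by (simp add: power_less_one_iff abs_square_less_1)
  have geo2: "(\<lambda>n. (\<rho>^2)^(n+1)) sums (\<rho>^2/(1-\<rho>^2))"
    using sums_mult[OF geometric_sums[of "\<rho>^2"], of "\<rho>^2"] r r2 by (simp add: power_add)
  have geo1: "(\<lambda>n. \<rho>^(n+1)) sums (\<rho>/(1-\<rho>))"
    using sums_mult[OF geometric_sums[of "\<rho>"], of "\<rho>"] r r1 by (simp add: power_add)
  have t2: "norm (b (n+1))^2 * \<rho>^(2*(n+1)) \<le> s^2 * (\<rho>^2)^(n+1)" for n
  proof -
    have e: "\<rho>^(2*(n+1)) = (\<rho>^2)^(n+1)" by (rule power_mult)
    have "norm (b (n+1))^2 \<le> s^2" using bk[of n] by (intro power_mono) auto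
    thus ?thesis unfolding e by (rule mult_right_mono) simp
  qed
  have sum2: "summable (\<lambda>n. norm (b (n+1))^2 * \<rho>^(2*(n+1)))"
    by (rule summable_comparison_test[of _ "\<lambda>n. s^2 * (\<rho>^2)^(n+1)"])
       (use t2 r r2 geo2 in \<open>auto intro!: exI[of _ 0] summable_mult sums_summable\<close>)
  have le2: "(\<Sum>n. norm (b (n+1))^2 * \<rho>^(2*(n+1))) \<le> s^2 * (\<rho>^2/(1-\<rho>^2))"
  proof -
    have "(\<Sum>n. norm (b (n+1))^2 * \<rho>^(2*(n+1))) \<le> (\<Sum>n. s^2 * (\<rho>^2)^(n+1))"
      by (rule suminf_le[OF t2 sum2 sums_summable[OF sums_mult[OF geo2, of "s^2"]]])
    also have "\<dots> = s^2 * (\<rho>^2/(1-\<rho>^2))"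
      using sums_unique[OF sums_mult[OF geo2, of "s^2"]] by simp
    finally show ?thesis .
  qed
  have le1: "(\<Sum>n. norm (b n) * \<rho>^n) \<le> A + s * (\<rho>/(1-\<rho>))"
  proof -
    have "(\<Sum>n. norm (b n) * \<rho>^n) = (\<Sum>n. norm (b (Suc n)) * \<rho>^(Suc n)) + A"
      using suminf_split_head[OF sum1] by (simp add: A_def)
    also have "(\<Sum>n. norm (b (Suc n)) * \<rho>^(Suc n)) \<le> (\<Sum>n. s * \<rho>^(n+1))"
      by (rule suminf_le)
         (use bk r geo1 summable_ignore_initial_segment[OF sum1, of 1]
          in \<open>auto intro!: mult_right_mono summable_mult sums_summable\<close>)
    also have "\<dots> = s * (\<rho>/(1-\<rho>))"
      using sums_unique[OF sums_mult[OF geo1, of s]] by simp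
    finally show ?thesis by simp
  qed
  have u: "0 \<le> \<rho>/(1-\<rho>)" "\<rho>/(1-\<rho>) \<le> 1/2" using r by (auto simp: field_simps)
  have v: "0 \<le> \<rho>^2/(1-\<rho>^2)" "\<rho>^2/(1-\<rho>^2) \<le> 1/8"
  proof -
    show "0 \<le> \<rho>^2/(1-\<rho>^2)" using r2 by simp
    have "\<rho>^2 \<le> (1/3)^2" using r by (intro power_mono) auto
    thus "\<rho>^2/(1-\<rho>^2) \<le> 1/8" using r2 by (simp add: field_simps)
  qed
  have c0: "0 \<le> 1/(1+A) + \<rho>/(1-\<rho>)" using A0 u by simp
  have "(\<Sum>n. norm (b n) * \<rho>^n) + (1/(1+A) + \<rho>/(1-\<rho>)) * (\<Sum>n. norm (b (n+1))^2 * \<rho>^(2*(n+1)))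
      \<le> (A + s * (\<rho>/(1-\<rho>))) + (1/(1+A) + \<rho>/(1-\<rho>)) * (s^2 * (\<rho>^2/(1-\<rho>^2)))"
    by (intro add_mono le1 mult_left_mono le2 c0)
  also have "\<dots> \<le> 1" unfolding s_def using final_ineq[OF A0 A1 u v] by simp
  finally show ?thesis using sum1 sum2 by (simp add: A_def)
qed

lemma part1:
  fixes \<gamma> :: real and f :: "complex \<Rightarrow> complex" and a :: "nat \<Rightarrow> complex" and \<rho> :: real
  assumes g0: "0 \<le> \<gamma>" and g1: "\<gamma> < 1" and adm: "admissible \<gamma> f a"
      and r: "0 \<le> \<rho>" "\<rho> \<le> 1/3"
  shows "summable (S1 \<gamma> a \<rho>) \<and> summable (S2 \<gamma> a \<rho>) \<and> bohr_lhs \<gamma> a \<rho> \<le> 1"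
proof -
  have d: "1 - \<gamma> > 0" using g1 by simp
  define b where "b n = a n / of_real ((1 - \<gamma>)^n)" for n
  define g where "g w = f ((w - of_real \<gamma>) / of_real (1 - \<gamma>))" for w
  have dz: "of_real (1 - \<gamma>) \<noteq> (0::complex)" using d by simp
  have key: "(\<lambda>n. b n * w^n) sums g w \<and> norm (g w) \<le> 1" if w: "norm w < 1" for w
  proof -
    define z where "z = (w - of_real \<gamma>) / of_real (1 - \<gamma>)"
    have zc: "z + of_real (\<gamma> / (1 - \<gamma>)) = w / of_real (1 - \<gamma>)"
    proof -
      have "z + of_real (\<gamma> / (1 - \<gamma>)) = (w - of_real \<gamma>) / of_real (1 - \<gamma>) + of_real \<gamma> / of_real (1 - \<gamma>)"
        by (simp only: z_def of_real_divide)
      also have "\<dots> = w / of_real (1 - \<gamma>)" by (simp only: add_divide_distrib[symmetric] diff_add_cancel)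
      finally show ?thesis .
    qed
    have "dist (of_real (- \<gamma> / (1 - \<gamma>))) z = norm (z + of_real (\<gamma> / (1 - \<gamma>)))"
      by (simp add: dist_norm norm_minus_commute)
    also have "\<dots> = norm w / (1 - \<gamma>)" using d by (simp only: zc norm_divide norm_of_real abs_of_pos)
    also have "\<dots> < 1 / (1 - \<gamma>)" using w d by (simp add: divide_strict_right_mono)
    finally have zO: "z \<in> Omega \<gamma>" by (simp add: Omega_def)
    have "(\<lambda>n. a n * (z + of_real (\<gamma> / (1 - \<gamma>)))^n) sums f z"
      using adm zO by (simp add: admissible_def)
    moreover have "a n * (z + of_real (\<gamma> / (1 - \<gamma>)))^n = b n * w^n" for n
      by (simp only: zc b_def power_divide of_real_power) simp
    moreover have "norm (f z) \<le> 1" using adm zO by (simp add: admissible_def)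
    ultimately show ?thesis by (simp add: g_def z_def)
  qed
  have C: "summable (\<lambda>n. norm (b n) * \<rho>^n) \<and> summable (\<lambda>n. norm (b (n+1))^2 * \<rho>^(2*(n+1)))
     \<and> (\<Sum>n. norm (b n) * \<rho>^n) + (1/(1+norm (b 0)) + \<rho>/(1-\<rho>)) * (\<Sum>n. norm (b (n+1))^2 * \<rho>^(2*(n+1))) \<le> 1"
    by (rule part1_core[of b g]) (use key r in auto)
  have nb: "norm (b n) = norm (a n) / (1 - \<gamma>)^n" for n
    using d by (simp only: b_def norm_divide norm_of_real abs_of_pos zero_less_power)
  have E1: "S1 \<gamma> a \<rho> = (\<lambda>n. norm (b n) * \<rho>^n)"
    by (rule ext) (simp add: S1_def nb)
  have E2: "S2 \<gamma> a \<rho> = (\<lambda>n. norm (b (n+1))^2 * \<rho>^(2*(n+1)))"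
  proof (rule ext)
    fix n
    have p: "((1 - \<gamma>)^(n+1))^2 = (1 - \<gamma>)^(2*(n+1))" by (metis power_mult mult.commute)
    show "S2 \<gamma> a \<rho> n = norm (b (n+1))^2 * \<rho>^(2*(n+1))"
      by (simp only: S2_def nb power_divide p)
  qed
  have E0: "norm (b 0) = norm (a 0)" by (simp add: nb)
  show ?thesis using C unfolding bohr_lhs_def E1 E2 E0 by simp
qed

lemma ser_moeb:
  fixes \<alpha> :: real and w :: complex
  assumes a: "0 \<le> \<alpha>" "\<alpha> < 1" and w: "norm w < 1"
  shows "(\<lambda>n. (if n = 0 then of_real \<alpha> else - of_real ((1-\<alpha>^2) * \<alpha>^(n-1))) * w^n)
           sums ((of_real \<alpha> - w) / (1 - of_real \<alpha> * w))"
proof -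
  have aw: "norm (of_real \<alpha> * w) < 1"
  proof -
    have "norm (of_real \<alpha> * w) = \<alpha> * norm w" using a by (simp add: norm_mult)
    also have "\<dots> \<le> 1 * norm w" using a by (intro mult_right_mono) auto
    finally show ?thesis using w by simp
  qed
  have nz: "1 - of_real \<alpha> * w \<noteq> 0"
  proof
    assume "1 - of_real \<alpha> * w = 0"
    hence "of_real \<alpha> * w = 1" by simp
    thus False using aw by simp
  qed
  define F where "F n = (if n = 0 then of_real \<alpha> else - of_real ((1-\<alpha>^2) * \<alpha>^(n-1))) * w^n" for n
  have "(\<lambda>n. (- of_real (1-\<alpha>^2) * w) * (of_real \<alpha> * w)^n) sums ((- of_real (1-\<alpha>^2) * w) * (1 / (1 - of_real \<alpha> * w)))"
    by (rule sums_mult[OF geometric_sums[OF aw]])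
  moreover have "(\<lambda>n. F (Suc n)) = (\<lambda>n. (- of_real (1-\<alpha>^2) * w) * (of_real \<alpha> * w)^n)"
    by (rule ext) (simp add: F_def power_mult_distrib algebra_simps)
  ultimately have "(\<lambda>n. F (Suc n)) sums ((- of_real (1-\<alpha>^2) * w) * (1 / (1 - of_real \<alpha> * w)))" by simp
  hence "F sums ((- of_real (1-\<alpha>^2) * w) * (1 / (1 - of_real \<alpha> * w)) + F 0)" by (simp only: sums_Suc_iff)
  moreover have "(- of_real (1-\<alpha>^2) * w) * (1 / (1 - of_real \<alpha> * w)) + F 0 = (of_real \<alpha> - w) / (1 - of_real \<alpha> * w)"
    using nz by (simp add: F_def field_simps power2_eq_square)
  ultimately have "F sums ((of_real \<alpha> - w) / (1 - of_real \<alpha> * w))" by simp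
  moreover have eqF: "F = (\<lambda>n. (if n = 0 then of_real \<alpha> else - of_real ((1-\<alpha>^2) * \<alpha>^(n-1))) * w^n)"
    by (rule ext) (simp add: F_def)
  ultimately show ?thesis by (simp only: eqF)
qed

lemma part2:
  fixes \<gamma> \<rho> :: real
  assumes g0: "0 \<le> \<gamma>" and g1: "\<gamma> < 1" and r: "1/3 < \<rho>" "\<rho> < 1"
  shows "\<exists>f a. admissible \<gamma> f a \<and> summable (S1 \<gamma> a \<rho>) \<and> summable (S2 \<gamma> a \<rho>) \<and> bohr_lhs \<gamma> a \<rho> > 1"
proof -
  have d: "1 - \<gamma> > 0" using g1 by simp
  define \<alpha> where "\<alpha> = (1/\<rho> + 1)/4"
  have r0: "\<rho> > 0" using r by simp
  have a0: "0 \<le> \<alpha>" using r0 by (simp add: \<alpha>_def)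
  have a1: "\<alpha> < 1"
  proof -
    have "1/\<rho> < 3" using r r0 by (simp add: field_simps)
    thus ?thesis by (simp add: \<alpha>_def)
  qed
  have key: "\<rho> * (1 + 2*\<alpha>) > 1"
  proof -
    have "\<rho> * (1 + 2*\<alpha>) = 3*\<rho>/2 + 1/2" using r0 by (simp add: \<alpha>_def field_simps)
    thus ?thesis using r by simp
  qed
  define W where "W z = of_real (1-\<gamma>) * z + of_real \<gamma>" for z :: complex
  define f where "f z = (of_real \<alpha> - W z) / (1 - of_real \<alpha> * W z)" for z
  define b :: "nat \<Rightarrow> complex" where "b n = (if n = 0 then of_real \<alpha> else - of_real ((1-\<alpha>^2) * \<alpha>^(n-1)))" for n :: nat
  define a where "a n = b n * of_real ((1-\<gamma>)^n)" for n
  have Wc: "W z = of_real (1-\<gamma>) * (z + of_real (\<gamma> / (1 - \<gamma>)))" for z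
    using d by (simp add: W_def field_simps)
  have Wn: "norm (W z) < 1" if "z \<in> Omega \<gamma>" for z
  proof -
    have "dist (of_real (- \<gamma> / (1 - \<gamma>))) z < 1 / (1 - \<gamma>)" using that by (simp add: Omega_def)
    moreover have "dist (of_real (- \<gamma> / (1 - \<gamma>))) z = norm (z + of_real (\<gamma> / (1 - \<gamma>)))"
      by (simp add: dist_norm norm_minus_commute)
    ultimately have "(1 - \<gamma>) * norm (z + of_real (\<gamma> / (1 - \<gamma>))) < 1" using d by (simp add: field_simps)
    thus ?thesis using d by (simp only: Wc norm_mult norm_of_real abs_of_pos)
  qed
  have nz: "1 - of_real \<alpha> * W z \<noteq> 0" if "z \<in> Omega \<gamma>" for z
  proof
    assume "1 - of_real \<alpha> * W z = 0"
    hence "norm (of_real \<alpha> * W z) = 1" by (metis norm_one right_minus_eq)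
    moreover have "norm (of_real \<alpha> * W z) \<le> 1 * norm (W z)"
      using a0 a1 mult_right_mono[of \<alpha> 1 "norm (W z)"] by (simp add: norm_mult)
    ultimately show False using Wn[OF that] by simp
  qed
  have hol: "f holomorphic_on Omega \<gamma>"
    unfolding f_def[abs_def] W_def using nz unfolding W_def by (intro holomorphic_intros) auto
  have fb: "norm (f z) \<le> 1" if "z \<in> Omega \<gamma>" for z
  proof -
    have "norm (Moebius_function 0 (of_real \<alpha>) (W z)) < 1"
      by (rule Moebius_function_norm_lt_1) (use a0 a1 Wn[OF that] in auto)
    moreover have "f z = - Moebius_function 0 (of_real \<alpha>) (W z)"
      by (simp add: f_def Moebius_function_simple minus_divide_left)
    ultimately show ?thesis by simp
  qed
  have fs: "(\<lambda>n. a n * (z + of_real (\<gamma> / (1 - \<gamma>)))^n) sums f z" if "z \<in> Omega \<gamma>" for z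
  proof -
    have "(\<lambda>n. b n * (W z)^n) sums f z"
      unfolding b_def f_def by (rule ser_moeb[OF a0 a1 Wn[OF that]])
    moreover have "b n * (W z)^n = a n * (z + of_real (\<gamma> / (1 - \<gamma>)))^n" for n
      by (simp add: a_def Wc power_mult_distrib)
    ultimately show ?thesis by simp
  qed
  have adm: "admissible \<gamma> f a" unfolding admissible_def using hol fb fs by blast
  have nb: "norm (b n) = norm (a n) / (1 - \<gamma>)^n" for n
    using d by (simp only: a_def norm_mult norm_of_real abs_of_pos zero_less_power) simp
  have E1: "S1 \<gamma> a \<rho> = (\<lambda>n. norm (b n) * \<rho>^n)"
    by (rule ext) (simp add: S1_def nb)
  have E2: "S2 \<gamma> a \<rho> = (\<lambda>n. norm (b (n+1))^2 * \<rho>^(2*(n+1)))"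
  proof (rule ext)
    fix n
    have p: "((1 - \<gamma>)^(n+1))^2 = (1 - \<gamma>)^(2*(n+1))" by (metis power_mult mult.commute)
    show "S2 \<gamma> a \<rho> n = norm (b (n+1))^2 * \<rho>^(2*(n+1))"
      by (simp only: S2_def nb power_divide p)
  qed
  have nbS: "norm (b (Suc n)) = (1-\<alpha>^2) * \<alpha>^n" for n
  proof -
    have "1 - \<alpha>^2 \<ge> 0" using a0 a1 by (simp add: power_le_one)
    hence "(1-\<alpha>^2) * \<alpha>^n \<ge> 0" using a0 by simp
    moreover have "norm (b (Suc n)) = \<bar>(1-\<alpha>^2) * \<alpha>^n\<bar>"
      by (simp only: b_def norm_minus_cancel norm_of_real if_False nat.distinct diff_Suc_1)
    ultimately show ?thesis by simp
  qed
  have ar: "norm (\<alpha> * \<rho>) < 1"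
  proof -
    have "\<alpha> * \<rho> \<le> 1 * \<rho>" using a1 r0 by (intro mult_right_mono) auto
    hence "\<alpha> * \<rho> < 1" using r by linarith
    moreover have "0 \<le> \<alpha> * \<rho>" using a0 r0 by simp
    ultimately show ?thesis by simp
  qed
  have "(\<lambda>n. ((1-\<alpha>^2) * \<rho>) * (\<alpha> * \<rho>)^n) sums (((1-\<alpha>^2) * \<rho>) * (1 / (1 - \<alpha> * \<rho>)))"
    by (rule sums_mult[OF geometric_sums[OF ar]])
  moreover have "(\<lambda>n. norm (b (Suc n)) * \<rho>^(Suc n)) = (\<lambda>n. ((1-\<alpha>^2) * \<rho>) * (\<alpha> * \<rho>)^n)"
    by (rule ext) (simp add: nbS power_mult_distrib)
  ultimately have "(\<lambda>n. norm (b (Suc n)) * \<rho>^(Suc n)) sums (((1-\<alpha>^2) * \<rho>) * (1 / (1 - \<alpha> * \<rho>)))" by simp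
  hence s1: "(\<lambda>n. norm (b n) * \<rho>^n) sums (((1-\<alpha>^2) * \<rho>) * (1 / (1 - \<alpha> * \<rho>)) + \<alpha>)"
  proof -
    have "(\<lambda>n. norm (b n) * \<rho>^n) sums (((1-\<alpha>^2) * \<rho>) * (1 / (1 - \<alpha> * \<rho>)) + norm (b 0) * \<rho>^0)"
      using sums_Suc_iff[of "\<lambda>n. norm (b n) * \<rho>^n"] \<open>(\<lambda>n. norm (b (Suc n)) * \<rho>^(Suc n)) sums _\<close> by blast
    moreover have "norm (b 0) * \<rho>^0 = \<alpha>" using a0 by (simp add: b_def)
    ultimately show ?thesis by simp
  qed
  have bl1: "norm (b n) \<le> 1" for n
  proof (cases n)
    case 0 thus ?thesis using a0 a1 by (simp add: b_def)
  next
    case (Suc m)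
    have "(1-\<alpha>^2) * \<alpha>^m \<le> 1 * 1"
      using a0 a1 by (intro mult_mono) (auto simp: power_le_one)
    thus ?thesis using Suc nbS by simp
  qed
  have r2: "\<rho>^2 < 1" using r r0 by (simp add: power_less_one_iff abs_square_less_1)
  have t2: "norm (b (n+1))^2 * \<rho>^(2*(n+1)) \<le> (\<rho>^2)^(n+1)" for n
  proof -
    have e: "\<rho>^(2*(n+1)) = (\<rho>^2)^(n+1)" by (rule power_mult)
    have "norm (b (n+1))^2 \<le> 1" using bl1[of "n+1"] by (simp add: power_le_one)
    thus ?thesis unfolding e using mult_right_mono[of "norm (b (n+1))^2" 1 "(\<rho>^2)^(n+1)"] by simp
  qed
  have sum2: "summable (\<lambda>n. norm (b (n+1))^2 * \<rho>^(2*(n+1)))"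
  proof (rule summable_comparison_test[of _ "\<lambda>n. (\<rho>^2)^(n+1)"])
    have nn: "0 \<le> norm (b (n+1))^2 * \<rho>^(2*(n+1))" for n using r0 by simp
    show "\<exists>N. \<forall>n\<ge>N. norm (norm (b (n+1))^2 * \<rho>^(2*(n+1))) \<le> (\<rho>^2)^(n+1)"
      using t2 nn by (intro exI[of _ 0]) (simp only: real_norm_def abs_of_nonneg, simp)
    show "summable (\<lambda>n. (\<rho>^2)^(n+1))"
      using summable_ignore_initial_segment[of "\<lambda>n. (\<rho>^2)^n" 1] r2 by simp
  qed
  have nn2: "0 \<le> (\<Sum>n. norm (b (n+1))^2 * \<rho>^(2*(n+1)))" by (rule suminf_nonneg[OF sum2]) (use r0 in simp)
  have c0: "0 \<le> 1/(1+norm (b 0)) + \<rho>/(1-\<rho>)" using r by simp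
  have big: "((1-\<alpha>^2) * \<rho>) * (1 / (1 - \<alpha> * \<rho>)) + \<alpha> > 1"
  proof -
    have ar1: "1 - \<alpha> * \<rho> > 0" using ar a0 r0 by (simp add: abs_mult)
    have "(1-\<alpha>^2) * \<rho> - (1-\<alpha>) * (1 - \<alpha> * \<rho>) = (1-\<alpha>) * (\<rho> * (1 + 2*\<alpha>) - 1)"
      by (simp add: algebra_simps power2_eq_square)
    moreover have "(1-\<alpha>) * (\<rho> * (1 + 2*\<alpha>) - 1) > 0" using a1 key by simp
    ultimately have "(1-\<alpha>^2) * \<rho> > (1-\<alpha>) * (1 - \<alpha> * \<rho>)" by simp
    hence "((1-\<alpha>^2) * \<rho>) / (1 - \<alpha> * \<rho>) > 1 - \<alpha>" using ar1 by (simp add: field_simps)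
    thus ?thesis by simp
  qed
  have "bohr_lhs \<gamma> a \<rho> = (\<Sum>n. norm (b n) * \<rho>^n) + (1/(1+norm (b 0)) + \<rho>/(1-\<rho>)) * (\<Sum>n. norm (b (n+1))^2 * \<rho>^(2*(n+1)))"
    unfolding bohr_lhs_def E1 E2 using nb[of 0] by simp
  also have "\<dots> \<ge> (\<Sum>n. norm (b n) * \<rho>^n)" using c0 nn2 by simp
  finally have "bohr_lhs \<gamma> a \<rho> > 1" using big sums_unique[OF s1] by simp
  moreover have "summable (S1 \<gamma> a \<rho>)" unfolding E1 using s1 by (rule sums_summable)
  moreover have "summable (S2 \<gamma> a \<rho>)" unfolding E2 by (rule sum2)
  ultimately show ?thesis using adm by blast
qed

theorem theorem2p1:
  fixes \<gamma> :: real
  assumes "0 \<le> \<gamma>" and "\<gamma> < 1"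
  shows "(\<forall>f a (z::complex). admissible \<gamma> f a \<and> norm (complex_of_real (1 - \<gamma>) * z + complex_of_real \<gamma>) \<le> 1/3 \<longrightarrow>
            (let \<rho> = norm (complex_of_real (1 - \<gamma>) * z + complex_of_real \<gamma>) in
              summable (S1 \<gamma> a \<rho>) \<and> summable (S2 \<gamma> a \<rho>) \<and> bohr_lhs \<gamma> a \<rho> \<le> 1))
       \<and> (\<forall>\<rho>. 1/3 < \<rho> \<and> \<rho> < 1 \<longrightarrow>
            (\<exists>f a. admissible \<gamma> f a \<and> summable (S1 \<gamma> a \<rho>) \<and> summable (S2 \<gamma> a \<rho>)
                   \<and> bohr_lhs \<gamma> a \<rho> > 1))"
  using part1[OF assms] part2[OF assms] by (auto simp: Let_def)

end
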